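(* Let $(X,d)$ be a compact metric space and let $f\in\mathcal{H}(X)$ be equicontinuous. If $f$ has the strict periodic shadowing property, then $f$ is topologically stable and $\dim X=0$.
   Context: $\mathcal{H}(X)$ is the set of homeomorphisms; $d_{C^0}(f,g)=\sup_x d(f(x),g(x))$; $D(f,g)=\max\{d_{C^0}(f,g),d_{C^0}(f^{-1},g^{-1})\}$. $f$ is equicontinuous if for every $\epsilon>0$ there is $\delta>0$ such that $d(x,y)\le\delta$ implies $\sup_{i\in\mathbb{Z}}d(f^i(x),f^i(y))\le\epsilon$. A $\delta$-cycle is a sequence $(x_i)_{i=0}^m$, $m\ge1$, with $d(f(x_i),x_{i+1})\le\delta$ for $0\le i<m$ and $x_0=x_m$. $f$ has the strict periodic shadowing property if for every $\epsilon>0$ there is $\delta>0$ such that for every $\delta$-cycle $(x_i)_{i=0}^m$ there is $p$ with $f^m(p)=p$ and $d(x_i,f^i(p))\le\epsilon$ for $0\le i\le m$. $f$ is topologically stable if for every $\epsilon>0$ there is $\delta>0$ such that for every $g\in\mathcal{H}(X)$ with $D(f,g)<\delta$ there is a continuous $h:X\to X$ with $d_{C^0}(h,\mathrm{id}_X)<\epsilon$ and $h\circ g=f\circ h$. *)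

theory Defs
  imports "HOL-Analysis.Analysis"
begin

text \<open>Homeomorphisms of the whole space (the compact metric space X is the type 'a).\<close>
definition is_homeo :: "('a::topological_space \<Rightarrow> 'a) \<Rightarrow> bool" where
  "is_homeo f \<longleftrightarrow> (\<exists>g. homeomorphism UNIV UNIV f g)"

definition dC0 :: "('a \<Rightarrow> 'b::metric_space) \<Rightarrow> ('a \<Rightarrow> 'b) \<Rightarrow> real" where
  "dC0 f g = (SUP x. dist (f x) (g x))"

definition Dhom :: "('a \<Rightarrow> 'a::metric_space) \<Rightarrow> ('a \<Rightarrow> 'a) \<Rightarrow> real" where
  "Dhom f g = max (dC0 f g) (dC0 (inv f) (inv g))"

definition iter_int :: "('a \<Rightarrow> 'a) \<Rightarrow> int \<Rightarrow> 'a \<Rightarrow> 'a" where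
  "iter_int f i = (if 0 \<le> i then f ^^ nat i else inv f ^^ nat (- i))"

definition equicontinuous_homeo :: "('a::metric_space \<Rightarrow> 'a) \<Rightarrow> bool" where
  "equicontinuous_homeo f \<longleftrightarrow>
     (\<forall>\<epsilon>>0. \<exists>\<delta>>0. \<forall>x y. dist x y \<le> \<delta> \<longrightarrow>
        (SUP i::int. dist (iter_int f i x) (iter_int f i y)) \<le> \<epsilon>)"

definition delta_cycle :: "('a::metric_space \<Rightarrow> 'a) \<Rightarrow> real \<Rightarrow> (nat \<Rightarrow> 'a) \<Rightarrow> nat \<Rightarrow> bool" where
  "delta_cycle f \<delta> xs m \<longleftrightarrow> m \<ge> 1 \<and> (\<forall>i<m. dist (f (xs i)) (xs (Suc i)) \<le> \<delta>) \<and> xs 0 = xs m"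

definition strict_periodic_shadowing :: "('a::metric_space \<Rightarrow> 'a) \<Rightarrow> bool" where
  "strict_periodic_shadowing f \<longleftrightarrow>
     (\<forall>\<epsilon>>0. \<exists>\<delta>>0. \<forall>xs m. delta_cycle f \<delta> xs m \<longrightarrow>
        (\<exists>p. (f ^^ m) p = p \<and> (\<forall>i\<le>m. dist (xs i) ((f ^^ i) p) \<le> \<epsilon>)))"

definition topologically_stable :: "('a::metric_space \<Rightarrow> 'a) \<Rightarrow> bool" where
  "topologically_stable f \<longleftrightarrow>
     (\<forall>\<epsilon>>0. \<exists>\<delta>>0. \<forall>g. is_homeo g \<and> Dhom f g < \<delta> \<longrightarrow>
        (\<exists>h. continuous_on UNIV h \<and> dC0 h id < \<epsilon> \<and> h \<circ> g = f \<circ> h))"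

text \<open>Lebesgue covering dimension of the (nonempty) whole space is 0: every finite open
  cover has a finite open refinement consisting of pairwise disjoint sets that covers the space.\<close>
definition covering_dim_zero :: "'a::topological_space itself \<Rightarrow> bool" where
  "covering_dim_zero _ \<longleftrightarrow> (UNIV :: 'a set) \<noteq> {} \<and>
     (\<forall>\<U>::'a set set. finite \<U> \<and> (\<forall>U\<in>\<U>. open U) \<and> \<Union>\<U> = UNIV \<longrightarrow>
        (\<exists>\<V>. finite \<V> \<and> (\<forall>V\<in>\<V>. open V) \<and> \<Union>\<V> = UNIV \<and>
             (\<forall>V\<in>\<V>. \<exists>U\<in>\<U>. V \<subseteq> U) \<and>
             (\<forall>V\<in>\<V>. \<forall>W\<in>\<V>. V \<noteq> W \<longrightarrow> V \<inter> W = {})))"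

end

theory Submission
  imports Defs
begin

locale eqsys =
  fixes f :: "'a::metric_space \<Rightarrow> 'a"
  assumes cpt: "compact (UNIV :: 'a set)"
    and hom: "is_homeo f"
    and eqc: "equicontinuous_homeo f"
    and sps: "strict_periodic_shadowing f"
begin

lemma bijf: "bij f"
proof -
  obtain g where "homeomorphism UNIV UNIV f g" using hom unfolding is_homeo_def by blast
  then have "\<And>x. g (f x) = x" "\<And>y. f (g y) = y" unfolding homeomorphism_def by auto
  then show ?thesis by (metis bij_betw_byWitness subset_UNIV)
qed

lemma surjfn: "surj (f ^^ n)"
  using bijf bij_fn bij_is_surj by blast

lemma bnd: "bounded (UNIV :: 'a set)"
  using cpt compact_imp_bounded by blast

lemma distle: "dist (x::'a) y \<le> diameter (UNIV::'a set)"
  using bnd diameter_bounded_bound by blast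

lemma eqc': 
  assumes "e > 0"
  obtains d where "d > 0" "\<And>x y n. dist x y \<le> d \<Longrightarrow> dist (iter_int f n x) (iter_int f n (y::'a)) \<le> e"
proof -
  obtain d where d: "d > 0" "\<And>x y::'a. dist x y \<le> d \<Longrightarrow> (SUP i::int. dist (iter_int f i x) (iter_int f i y)) \<le> e"
    using eqc assms unfolding equicontinuous_homeo_def by blast
  show ?thesis
  proof (rule that[OF d(1)])
    fix x y :: 'a and n assume "dist x y \<le> d"
    then have s: "(SUP i::int. dist (iter_int f i x) (iter_int f i y)) \<le> e" by (rule d(2))
    have "bdd_above (range (\<lambda>i::int. dist (iter_int f i x) (iter_int f i y)))"
      using distle by (intro bdd_aboveI) auto
    then show "dist (iter_int f n x) (iter_int f n y) \<le> e"
      using s cSUP_upper[OF UNIV_I, of "\<lambda>i::int. dist (iter_int f i x) (iter_int f i y)" n] by linarith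
  qed
qed

lemma eqf:
  assumes "e > 0"
  obtains d where "d > 0" "\<And>x y n. dist x y \<le> d \<Longrightarrow> dist ((f^^n) x) ((f^^n) y) \<le> e"
proof -
  obtain d where d: "d > 0" "\<And>x y n. dist x y \<le> d \<Longrightarrow> dist (iter_int f n x) (iter_int f n y) \<le> e"
    using eqc' assms by blast
  show ?thesis
    using d(1) d(2)[of _ _ "int _"] that by (simp add: iter_int_def)
qed

lemma invfun: "(inv f ^^ k) ((f ^^ k) a) = a"
proof (induction k arbitrary: a)
  case 0 then show ?case by simp
next
  case (Suc k)
  have "inv f (f ((f^^k) a)) = (f^^k) a" using bijf by (simp add: bij_is_inj)
  have e1: "(inv f ^^ Suc k) = (inv f ^^ k) \<circ> inv f" by (rule funpow_Suc_right)
  have "(inv f ^^ Suc k) ((f ^^ Suc k) a) = (inv f ^^ k) (inv f (f ((f^^k) a)))"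
    unfolding e1 by simp
  then show ?case using Suc \<open>inv f (f ((f^^k) a)) = (f^^k) a\<close> by simp
qed

lemma eqb:
  assumes "e > 0"
  obtains d where "d > 0" "\<And>x y k. dist ((f^^k) x) ((f^^k) y) \<le> d \<Longrightarrow> dist x y \<le> e"
proof -
  obtain d where d: "d > 0" "\<And>x y n. dist x y \<le> d \<Longrightarrow> dist (iter_int f n x) (iter_int f n y) \<le> e"
    using eqc' assms by blast
  show ?thesis
  proof (rule that[OF d(1)])
    fix x y :: 'a and k assume "dist ((f^^k) x) ((f^^k) y) \<le> d"
    from d(2)[OF this, of "- int k"] show "dist x y \<le> e"
      by (cases "k = 0") (simp_all add: iter_int_def invfun)
  qed
qed

lemma UR:
  assumes "L \<ge> 1" "\<eta> > 0"
  obtains N where "N \<ge> 1" "\<And>q. dist ((f^^(L*N)) q) q \<le> \<eta>"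
proof -
  obtain de where de: "de > 0" "\<And>x y n. dist x y \<le> de \<Longrightarrow> dist ((f^^n) x) ((f^^n) (y::'a)) \<le> \<eta>/3"
    using eqf[of "\<eta>/3"] assms by auto
  define \<gamma> where "\<gamma> = min de (\<eta>/3)"
  have g0: "\<gamma> > 0" using de assms by (simp add: \<gamma>_def)
  obtain G where G: "finite G" "(UNIV::'a set) \<subseteq> (\<Union>x\<in>G. ball x (\<gamma>/2))"
    using cpt g0 unfolding compact_eq_totally_bounded by (meson half_gt_zero)
  define c where "c n = (\<lambda>a. if a \<in> G then (SOME b. b \<in> G \<and> (f^^(L*n)) a \<in> ball b (\<gamma>/2)) else undefined)" for n
  have cspec: "c n a \<in> G \<and> (f^^(L*n)) a \<in> ball (c n a) (\<gamma>/2)" if "a \<in> G" for n a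
  proof -
    have "\<exists>b. b \<in> G \<and> (f^^(L*n)) a \<in> ball b (\<gamma>/2)" using G(2) by blast
    then have "(SOME b. b \<in> G \<and> (f^^(L*n)) a \<in> ball b (\<gamma>/2)) \<in> G \<and> (f^^(L*n)) a \<in> ball (SOME b. b \<in> G \<and> (f^^(L*n)) a \<in> ball b (\<gamma>/2)) (\<gamma>/2)"
      by (rule someI_ex)
    then show ?thesis using that unfolding c_def by simp
  qed
  have "range c \<subseteq> PiE G (\<lambda>_. G)"
    using cspec by (auto simp: c_def PiE_def extensional_def)
  then have "finite (range c)" using finite_PiE[OF G(1), of "\<lambda>_. G"] G(1) finite_subset by blast
  then have "\<not> inj c" using finite_imageD infinite_UNIV_nat by blast
  then obtain m n where mn: "m \<noteq> n" "c m = c n" unfolding inj_def by blast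
  have "\<exists>m n. m < n \<and> c m = c n"
    using mn by (metis linorder_neqE_nat)
  then obtain m n where mn: "m < n" "c m = c n" by blast
  have close: "dist ((f^^(L*m)) q) ((f^^(L*n)) q) \<le> \<eta>" for q
  proof -
    obtain a where a: "a \<in> G" "q \<in> ball a (\<gamma>/2)" using G(2) by blast
    have "dist q a \<le> de" using a(2) g0 by (simp add: \<gamma>_def dist_commute)
    then have d1: "dist ((f^^(L*m)) q) ((f^^(L*m)) a) \<le> \<eta>/3" and d2: "dist ((f^^(L*n)) q) ((f^^(L*n)) a) \<le> \<eta>/3"
      using de(2) by auto
    have "(f^^(L*m)) a \<in> ball (c m a) (\<gamma>/2)" "(f^^(L*n)) a \<in> ball (c m a) (\<gamma>/2)"
      using cspec[OF a(1), of m] cspec[OF a(1), of n] mn(2) by auto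
    then have d3: "dist ((f^^(L*m)) a) ((f^^(L*n)) a) \<le> \<gamma>"
      using dist_triangle[of "(f^^(L*m)) a" "(f^^(L*n)) a" "c m a"] by (simp add: dist_commute)
    have "\<gamma> \<le> \<eta>/3" by (simp add: \<gamma>_def)
    then show ?thesis using d1 d2 d3 dist_triangle3[of "(f^^(L*m)) q" "(f^^(L*n)) q" "(f^^(L*m)) a"]
      dist_triangle[of "(f^^(L*m)) a" "(f^^(L*n)) q" "(f^^(L*n)) a"]
      dist_commute[of "(f^^(L*m)) a" "(f^^(L*m)) q"] dist_commute[of "(f^^(L*n)) a" "(f^^(L*n)) q"] by linarith
  qed
  show ?thesis
  proof (rule that[of "n - m"])
    show "n - m \<ge> 1" using mn by simp
    fix r
    obtain q where q: "r = (f^^(L*m)) q" using surjfn[of "L*m"] by (metis surjD)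
    have "L * (n - m) + L * m = L * n" using mn by (simp add: diff_mult_distrib2)
    then have "(f^^(L*(n-m))) r = (f^^(L*n)) q" unfolding q by (metis funpow_add o_apply)
    then show "dist ((f^^(L*(n-m))) r) r \<le> \<eta>" using close[of q] q by (simp add: dist_commute)
  qed
qed

definition E :: "real \<Rightarrow> 'a \<Rightarrow> 'a \<Rightarrow> bool" where
  "E \<rho> a b \<longleftrightarrow> (\<forall>n. dist ((f^^n) a) ((f^^n) b) \<le> \<rho>)"

lemma E_sym: "E \<rho> a b \<Longrightarrow> E \<rho> b a"
  unfolding E_def by (simp add: dist_commute)

lemma E_f: "E \<rho> a b \<Longrightarrow> E \<rho> (f a) (f b)"
  unfolding E_def
proof (intro allI)
  fix n assume "\<forall>n. dist ((f ^^ n) a) ((f ^^ n) b) \<le> \<rho>"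
  then have "dist ((f ^^ Suc n) a) ((f ^^ Suc n) b) \<le> \<rho>" by blast
  moreover have "(f^^n) (f x) = (f^^Suc n) x" for x by (simp only: funpow_Suc_right o_apply)
  ultimately show "dist ((f ^^ n) (f a)) ((f ^^ n) (f b)) \<le> \<rho>" by simp
qed

lemma tri_step:
  fixes k i :: nat
  assumes "k \<ge> 1"
  defines "tri \<equiv> \<lambda>i::nat. if i \<le> k then i else 2*k - i"
  shows "tri (Suc i) = tri i \<or> (tri (Suc i) = Suc (tri i) \<and> tri i < k) \<or> (tri i = Suc (tri (Suc i)) \<and> tri (Suc i) < k)"
  using assms(1) unfolding tri_def by auto

lemma chain_diam:
  assumes "e > 0"
  obtains \<rho> where "\<rho> > 0" "\<And>a b. (E \<rho>)\<^sup>*\<^sup>* a b \<Longrightarrow> dist a b \<le> e"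
proof -
  obtain d1 where d1: "d1 > 0" "\<And>x y k. dist ((f^^k) x) ((f^^k) y) \<le> d1 \<Longrightarrow> dist x (y::'a) \<le> e"
    using eqb assms by blast
  obtain d2 where d2: "d2 > 0" "\<And>x y n. dist x y \<le> d2 \<Longrightarrow> dist ((f^^n) x) ((f^^n) (y::'a)) \<le> d1/2"
    using eqf[of "d1/2"] d1 by auto
  define es where "es = min d2 (d1/2)"
  have es0: "es > 0" using d1 d2 by (simp add: es_def)
  obtain ds where ds: "ds > 0" "\<And>xs m. delta_cycle f ds xs m \<Longrightarrow>
        (\<exists>p. (f ^^ m) p = p \<and> (\<forall>i\<le>m. dist (xs i) ((f ^^ i) p) \<le> es))"
  proof -
    from sps have "\<forall>\<epsilon>>0. \<exists>\<delta>>0. \<forall>xs m. delta_cycle f \<delta> xs m \<longrightarrow>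
        (\<exists>p. (f ^^ m) p = p \<and> (\<forall>i\<le>m. dist (xs i) ((f ^^ i) p) \<le> \<epsilon>))"
      unfolding strict_periodic_shadowing_def .
    from this[rule_format, OF es0] obtain ds where "ds > 0" "\<forall>xs m. delta_cycle f ds xs m \<longrightarrow>
        (\<exists>p. (f ^^ m) p = p \<and> (\<forall>i\<le>m. dist (xs i) ((f ^^ i) p) \<le> es))" by blast
    then show ?thesis using that by blast
  qed
  show ?thesis
  proof (rule that[OF ds(1)])
    fix a b assume "(E ds)\<^sup>*\<^sup>* a b"
    from rtranclp_imp_relpowp[OF this] obtain k where "(E ds ^^ k) a b" ..
    then have "\<exists>z. z 0 = a \<and> z k = b \<and> (\<forall>i<k. E ds (z i) (z (Suc i)))"
      by (simp only: relpowp_fun_conv)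
    then obtain z where z: "z 0 = a" "z k = b" "\<And>i. i < k \<Longrightarrow> E ds (z i) (z (Suc i))"
      by blast
    show "dist a b \<le> e"
    proof (cases "k = 0")
      case True then show ?thesis using z assms by simp
    next
      case False
      then have k1: "k \<ge> 1" by simp
      obtain N where N: "N \<ge> 1" "\<And>q. dist ((f^^((2*k+1)*N)) q) q \<le> ds"
        using UR[of "2*k+1" ds] ds(1) by auto
      define m where "m = (2*k+1)*N"
      have mk: "m \<ge> 2*k+1" using N(1) mult_le_mono2[of 1 N "2*k+1"] unfolding m_def by simp
      define tri where "tri = (\<lambda>i::nat. if i \<le> k then i else 2*k - i)"
      define xs where "xs = (\<lambda>i. if i < m then (f^^i) (z (tri i)) else a)"
      have trik: "tri i \<le> k" for i unfolding tri_def by auto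
      have "delta_cycle f ds xs m"
        unfolding delta_cycle_def
      proof (intro conjI allI impI)
        show "1 \<le> m" using mk by simp
        show "xs 0 = xs m" using mk z(1) by (simp add: xs_def tri_def)
        fix i assume im: "i < m"
        show "dist (f (xs i)) (xs (Suc i)) \<le> ds"
        proof (cases "Suc i < m")
          case True
          have fx: "f (xs i) = (f^^Suc i) (z (tri i))" using im by (simp add: xs_def)
          have xs1: "xs (Suc i) = (f^^Suc i) (z (tri (Suc i)))" using True by (simp add: xs_def)
          have "tri (Suc i) = tri i \<or> (tri (Suc i) = Suc (tri i) \<and> tri i < k) \<or> (tri i = Suc (tri (Suc i)) \<and> tri (Suc i) < k)"
            using tri_step[OF k1] unfolding tri_def by blast
          then show ?thesis
          proof (elim disjE conjE)
            assume "tri (Suc i) = tri i" then show ?thesis using fx xs1 ds(1) by simp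
          next
            assume "tri (Suc i) = Suc (tri i)" "tri i < k"
            then have "E ds (z (tri i)) (z (tri (Suc i)))" using z(3) by simp
            then have "dist ((f^^Suc i) (z (tri i))) ((f^^Suc i) (z (tri (Suc i)))) \<le> ds" unfolding E_def by blast
            then show ?thesis using fx xs1 by simp
          next
            assume "tri i = Suc (tri (Suc i))" "tri (Suc i) < k"
            then have "E ds (z (tri i)) (z (tri (Suc i)))" using z(3) E_sym by simp
            then have "dist ((f^^Suc i) (z (tri i))) ((f^^Suc i) (z (tri (Suc i)))) \<le> ds" unfolding E_def by blast
            then show ?thesis using fx xs1 by simp
          qed
        next
          case False
          then have mi: "m = Suc i" using im by simp
          then have "tri i = 0" using mk unfolding tri_def by auto
          then have "f (xs i) = (f^^m) a" using im mi z(1) by (simp add: xs_def)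
          moreover have "xs (Suc i) = a" using mi by (simp add: xs_def)
          ultimately show ?thesis using N(2)[of a] m_def by simp
        qed
      qed
      then obtain p where p: "(f ^^ m) p = p" "\<And>i. i \<le> m \<Longrightarrow> dist (xs i) ((f ^^ i) p) \<le> es"
        using ds(2) by blast
      have "dist a p \<le> es" using p(2)[of 0] mk z(1) by (simp add: xs_def tri_def)
      then have "dist a p \<le> d2" by (simp add: es_def)
      then have 1: "dist ((f^^k) a) ((f^^k) p) \<le> d1/2" using d2(2) by blast
      have "dist ((f^^k) b) ((f^^k) p) \<le> es" using p(2)[of k] mk z(2) by (simp add: xs_def tri_def)
      then have 2: "dist ((f^^k) b) ((f^^k) p) \<le> d1/2" by (simp add: es_def)
      have "dist ((f^^k) a) ((f^^k) b) \<le> d1"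
        using 1 2 dist_triangle3[of "(f^^k) a" "(f^^k) b" "(f^^k) p"] dist_commute[of "(f^^k) p" "(f^^k) a"]
           dist_commute[of "(f^^k) p" "(f^^k) b"] by linarith
      then show ?thesis using d1(2) by blast
    qed
  qed
qed

lemma E_close:
  assumes "\<rho> > 0"
  obtains \<tau> where "\<tau> > 0" "\<And>a b. dist a b \<le> \<tau> \<Longrightarrow> E \<rho> a b"
proof -
  obtain d where d: "d > 0" "\<And>x y n. dist x y \<le> d \<Longrightarrow> dist ((f^^n) x) ((f^^n) (y::'a)) \<le> \<rho>"
    using eqf assms by blast
  show ?thesis using that[OF d(1)] d(2) unfolding E_def by blast
qed

lemma R_sym: "(E \<rho>)\<^sup>*\<^sup>* a b \<Longrightarrow> (E \<rho>)\<^sup>*\<^sup>* b a"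
proof (induction rule: rtranclp.induct)
  case (rtrancl_refl a) then show ?case by simp
next
  case (rtrancl_into_rtrancl a b c)
  then show ?case using E_sym converse_rtranclp_into_rtranclp by metis
qed

lemma R_f: "(E \<rho>)\<^sup>*\<^sup>* a b \<Longrightarrow> (E \<rho>)\<^sup>*\<^sup>* (f a) (f b)"
proof (induction rule: rtranclp.induct)
  case (rtrancl_refl a) then show ?case by simp
next
  case (rtrancl_into_rtrancl a b c)
  then show ?case using E_f rtranclp.rtrancl_into_rtrancl by metis
qed

lemma R_fn: "(E \<rho>)\<^sup>*\<^sup>* a b \<Longrightarrow> (E \<rho>)\<^sup>*\<^sup>* ((f^^n) a) ((f^^n) b)"
  by (induction n) (simp_all add: R_f)

lemma diam_le_metric:
  fixes S :: "'b::metric_space set"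
  assumes "S \<noteq> {}" "\<And>x y. x \<in> S \<Longrightarrow> y \<in> S \<Longrightarrow> dist x y \<le> d"
  shows "diameter S \<le> d"
  using assms by (auto simp: diameter_def intro!: cSUP_least)

lemma dim0: "covering_dim_zero TYPE('a)"
  unfolding covering_dim_zero_def
proof (intro conjI allI impI)
  show "(UNIV::'a set) \<noteq> {}" by simp
  fix \<U> :: "'a set set"
  assume U: "finite \<U> \<and> (\<forall>U\<in>\<U>. open U) \<and> \<Union>\<U> = UNIV"
  have Une: "\<U> \<noteq> {}" using U by auto
  obtain lam where lam: "lam > 0" "\<And>T. \<lbrakk>T \<subseteq> UNIV; diameter T < lam\<rbrakk> \<Longrightarrow> \<exists>B \<in> \<U>. T \<subseteq> B"
    using Lebesgue_number_lemma[OF cpt Une] U by auto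
  obtain \<rho> where rho: "\<rho> > 0" "\<And>a b. (E \<rho>)\<^sup>*\<^sup>* a b \<Longrightarrow> dist a b \<le> lam/2"
    using chain_diam[of "lam/2"] lam by auto
  obtain \<tau> where tau: "\<tau> > 0" "\<And>a b. dist a b \<le> \<tau> \<Longrightarrow> E \<rho> a b"
    using E_close rho by blast
  define R where "R = (E \<rho>)\<^sup>*\<^sup>*"
  define cls where "cls x = {y. R x y}" for x
  have Rtr: "R a c" if "R a b" "R b c" for a b c using that unfolding R_def by simp
  have Rsym: "R a b \<Longrightarrow> R b a" for a b unfolding R_def by (rule R_sym)
  have clseq: "cls x = cls y" if "R x y" for x y
    using that Rtr Rsym unfolding cls_def by blast
  have opn: "open (cls x)" for x
    unfolding open_contains_ball
  proof
    fix y assume "y \<in> cls x"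
    then have "R x y" by (simp add: cls_def)
    have "ball y \<tau> \<subseteq> cls x"
    proof
      fix z assume "z \<in> ball y \<tau>"
      then have "E \<rho> y z" using tau(2) by simp
      then show "z \<in> cls x" using \<open>R x y\<close> unfolding cls_def R_def by simp
    qed
    then show "\<exists>\<epsilon>>0. ball y \<epsilon> \<subseteq> cls x" using tau(1) by blast
  qed
  have self: "x \<in> cls x" for x unfolding cls_def R_def by simp
  have cov: "(UNIV::'a set) \<subseteq> \<Union>(range cls)" using self by blast
  obtain V' where V': "V' \<subseteq> range cls" "finite V'" "UNIV \<subseteq> \<Union>V'"
    using compactE[OF cpt cov] opn by blast
  have "range cls \<subseteq> V'"
  proof
    fix C assume "C \<in> range cls"
    then obtain x where x: "C = cls x" by blast
    obtain D where "D \<in> V'" "x \<in> D" using V'(3) by blast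
    then obtain y where "D = cls y" "R y x" using V'(1) unfolding cls_def by blast
    then show "C \<in> V'" using clseq \<open>D \<in> V'\<close> x by metis
  qed
  then have fin: "finite (range cls)" using V'(2) finite_subset by blast
  show "\<exists>\<V>. finite \<V> \<and> (\<forall>V\<in>\<V>. open V) \<and> \<Union>\<V> = UNIV \<and>
             (\<forall>V\<in>\<V>. \<exists>U\<in>\<U>. V \<subseteq> U) \<and>
             (\<forall>V\<in>\<V>. \<forall>W\<in>\<V>. V \<noteq> W \<longrightarrow> V \<inter> W = {})"
  proof (intro exI conjI ballI impI)
    show "finite (range cls)" by (rule fin)
    show "open V" if "V \<in> range cls" for V using that opn by blast
    show "\<Union>(range cls) = UNIV" using cov by blast
  next
    fix V assume "V \<in> range cls"
    then obtain x where x: "V = cls x" by blast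
    have "diameter V \<le> lam/2"
      unfolding x
    proof (rule diam_le_metric)
      show "cls x \<noteq> {}" using self by blast
      fix a b assume "a \<in> cls x" "b \<in> cls x"
      then have "R a b" using Rtr Rsym unfolding cls_def by blast
      then show "dist a b \<le> lam/2" using rho(2) unfolding R_def by blast
    qed
    then have "diameter V < lam" using lam by simp
    then show "\<exists>U\<in>\<U>. V \<subseteq> U" using lam(2) by blast
  next
    fix V W assume "V \<in> range cls" "W \<in> range cls" "V \<noteq> W"
    then obtain x y where xy: "V = cls x" "W = cls y" by blast
    show "V \<inter> W = {}"
    proof (rule ccontr)
      assume "V \<inter> W \<noteq> {}"
      then obtain z where "R x z" "R y z" using xy unfolding cls_def by blast
      then have "cls x = cls y" using clseq Rsym by metis
      then show False using xy \<open>V \<noteq> W\<close> by simp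
    qed
  qed
qed

lemma topstab: "topologically_stable f"
  unfolding topologically_stable_def
proof (intro allI impI)
  fix \<epsilon> :: real assume e0: "\<epsilon> > 0"
  define e4 where "e4 = \<epsilon>/4"
  have e40: "e4 > 0" using e0 by (simp add: e4_def)
  obtain ds where ds: "ds > 0" "\<And>xs m. delta_cycle f ds xs m \<Longrightarrow>
        (\<exists>p. (f ^^ m) p = p \<and> (\<forall>i\<le>m. dist (xs i) ((f ^^ i) p) \<le> e4))"
  proof -
    from sps have "\<forall>\<epsilon>>0. \<exists>\<delta>>0. \<forall>xs m. delta_cycle f \<delta> xs m \<longrightarrow>
        (\<exists>p. (f ^^ m) p = p \<and> (\<forall>i\<le>m. dist (xs i) ((f ^^ i) p) \<le> \<epsilon>))"
      unfolding strict_periodic_shadowing_def .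
    from this[rule_format, OF e40] obtain ds where "ds > 0" "\<forall>xs m. delta_cycle f ds xs m \<longrightarrow>
        (\<exists>p. (f ^^ m) p = p \<and> (\<forall>i\<le>m. dist (xs i) ((f ^^ i) p) \<le> e4))" by blast
    then show ?thesis using that by blast
  qed
  obtain \<rho> where rho: "\<rho> > 0" "\<And>a b. (E \<rho>)\<^sup>*\<^sup>* a b \<Longrightarrow> dist a b \<le> min ds e4"
    using chain_diam[of "min ds e4"] ds(1) e40 by auto
  obtain \<tau> where tau: "\<tau> > 0" "\<And>a b. dist a b \<le> \<tau> \<Longrightarrow> E \<rho> a b"
    using E_close rho by blast
  obtain M where M: "M \<ge> 1" "\<And>q. dist ((f^^(1*M)) q) q \<le> \<tau>"
    using UR[of 1 \<tau>] tau(1) by auto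
  define R where "R = (E \<rho>)\<^sup>*\<^sup>*"
  have Rtr: "R a c" if "R a b" "R b c" for a b c using that unfolding R_def by simp
  have Rsym: "R a b \<Longrightarrow> R b a" for a b unfolding R_def by (rule R_sym)
  have Rrefl: "R a a" for a unfolding R_def by simp
  have Rfn: "R a b \<Longrightarrow> R ((f^^n) a) ((f^^n) b)" for a b n unfolding R_def by (rule R_fn)
  have Rdist: "R a b \<Longrightarrow> dist a b \<le> ds" "R a b \<Longrightarrow> dist a b \<le> e4" for a b
    using rho(2) unfolding R_def by fastforce+
  have Rclose: "dist a b \<le> \<tau> \<Longrightarrow> R a b" for a b
    using tau(2) unfolding R_def by blast
  have RM: "R ((f^^M) x) x" for x using M(2)[of x] Rclose by simp
  have RMi: "R ((f^^(M*i)) x) x" for i x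
  proof (induction i)
    case 0 then show ?case using Rrefl by simp
  next
    case (Suc i)
    have "(f^^(M*Suc i)) x = (f^^M) ((f^^(M*i)) x)" by (simp add: funpow_add)
    then show ?case using RM[of "(f^^(M*i)) x"] Suc Rtr by metis
  qed
  have fM: "(f^^M) y = (f^^(M-1)) (f y)" for y
  proof -
    have "M = (M - 1) + 1" using M(1) by simp
    then have "(f^^M) = (f^^(M-1)) \<circ> (f^^1)" by (metis funpow_add)
    then show ?thesis by simp
  qed
  have Rback: "R (f a) (f b) \<Longrightarrow> R a b" for a b
  proof -
    assume "R (f a) (f b)"
    then have "R ((f^^(M-1)) (f a)) ((f^^(M-1)) (f b))" by (rule Rfn)
    then have "R ((f^^M) a) ((f^^M) b)" using fM by simp
    then show "R a b" using RM Rsym Rtr by metis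
  qed
  define S where "S x = {y. \<exists>i. R y ((f^^i) x)}" for x
  have S_cls: "S x = S y" if "R x y" for x y
  proof -
    have "R ((f^^i) x) ((f^^i) y)" for i using that Rfn by blast
    then show ?thesis unfolding S_def using Rtr Rsym by blast
  qed
  have S_f: "S (f x) = S x" for x
  proof
    show "S (f x) \<subseteq> S x"
    proof
      fix y assume "y \<in> S (f x)"
      then obtain i where "R y ((f^^i) (f x))" by (auto simp: S_def)
      moreover have "(f^^i) (f x) = (f^^Suc i) x" by (simp only: funpow_Suc_right o_apply)
      ultimately show "y \<in> S x" unfolding S_def by (auto intro!: exI[of _ "Suc i"])
    qed
    show "S x \<subseteq> S (f x)"
    proof
      fix y assume "y \<in> S x"
      then obtain i where i: "R y ((f^^i) x)" by (auto simp: S_def)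
      have RMi': "R ((f^^M) ((f^^i) x)) ((f^^i) x)" by (rule RM)
      have eq: "(f^^M) ((f^^i) x) = (f^^(M-1+i)) (f x)"
      proof -
        have "(f^^M) ((f^^i) x) = (f^^(M+i)) x" by (simp add: funpow_add)
        also have "M + i = (M - 1 + i) + 1" using M(1) by simp
        also have "(f^^((M - 1 + i) + 1)) x = (f^^(M-1+i)) (f x)" by (simp only: funpow_add o_apply) simp
        finally show ?thesis .
      qed
      have "R y ((f^^M) ((f^^i) x))" using Rtr[OF i Rsym[OF RMi']] .
      then have "R y ((f^^(M-1+i)) (f x))" by (simp only: eq)
      then show "y \<in> S (f x)" unfolding S_def by blast
    qed
  qed
  define bf where "bf x = (SOME b. b \<in> S x)" for x
  have bS: "bf x \<in> S x" for x
  proof -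
    have "R x ((f^^0) x)" using Rrefl by simp
    then have "x \<in> S x" unfolding S_def by blast
    then show ?thesis unfolding bf_def by (rule someI)
  qed
  define K where "K b = (LEAST k. k \<ge> 1 \<and> R ((f^^k) b) b)" for b
  have Kex: "\<exists>k. k \<ge> 1 \<and> R ((f^^k) b) b" for b using M(1) RM by blast
  have K1: "K b \<ge> 1" and KR: "R ((f^^(K b)) b) b" for b
    using LeastI_ex[OF Kex[of b]] unfolding K_def by auto
  have Kmin: "k \<ge> 1 \<Longrightarrow> R ((f^^k) b) b \<Longrightarrow> K b \<le> k" for k b
    unfolding K_def by (simp add: Least_le)
  define Q where "Q b = (SOME p. (f^^(K b)) p = p \<and> (\<forall>i<K b. dist ((f^^i) b) ((f^^i) p) \<le> e4))" for b
  have Qex: "\<exists>p. (f^^(K b)) p = p \<and> (\<forall>i<K b. dist ((f^^i) b) ((f^^i) p) \<le> e4)" for b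
  proof -
    define xs where "xs = (\<lambda>i. if i < K b then (f^^i) b else b)"
    have "delta_cycle f ds xs (K b)"
      unfolding delta_cycle_def
    proof (intro conjI allI impI)
      show "1 \<le> K b" by (rule K1)
      show "xs 0 = xs (K b)" using K1[of b] by (simp add: xs_def)
      fix i assume i: "i < K b"
      show "dist (f (xs i)) (xs (Suc i)) \<le> ds"
      proof (cases "Suc i < K b")
        case True then show ?thesis using i ds(1) by (simp add: xs_def)
      next
        case False
        then have "Suc i = K b" using i by simp
        then have "f (xs i) = (f^^(K b)) b" "xs (Suc i) = b" using i by (auto simp: xs_def simp del: funpow.simps dest: sym) (metis funpow.simps(2) o_apply)
        then show ?thesis using Rdist(1)[OF KR[of b]] by simp
      qed
    qed
    then obtain p where p1: "(f ^^ K b) p = p" and p2: "\<forall>i\<le>K b. dist (xs i) ((f ^^ i) p) \<le> e4"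
      using ds(2) by blast
    have "dist ((f^^i) b) ((f^^i) p) \<le> e4" if "i < K b" for i
      using p2[rule_format, of i] that by (simp add: xs_def)
    then show ?thesis using p1 by blast
  qed
  have QP: "(f^^(K b)) (Q b) = Q b" "\<And>i. i < K b \<Longrightarrow> dist ((f^^i) b) ((f^^i) (Q b)) \<le> e4" for b
    using someI_ex[OF Qex[of b]] unfolding Q_def by auto
  define J where "J x = (LEAST j. R ((f^^j) (bf x)) x)" for x
  have Jex: "\<exists>j. R ((f^^j) (bf x)) x" for x
  proof -
    obtain i where i: "R (bf x) ((f^^i) x)" using bS[of x] unfolding S_def by blast
    then have "R ((f^^((M-1)*i)) (bf x)) ((f^^((M-1)*i)) ((f^^i) x))" by (rule Rfn)
    moreover have "(f^^((M-1)*i)) ((f^^i) x) = (f^^(M*i)) x"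
    proof -
      have "(M-1)*i + i = M*i" using M(1) by (simp add: algebra_simps)
      then show ?thesis by (metis funpow_add o_apply)
    qed
    ultimately have "R ((f^^((M-1)*i)) (bf x)) ((f^^(M*i)) x)" by simp
    then show ?thesis using Rtr[OF _ RMi] by blast
  qed
  have JR: "R ((f^^(J x)) (bf x)) x" for x using LeastI_ex[OF Jex[of x]] unfolding J_def .
  have Jmin: "R ((f^^j) (bf x)) x \<Longrightarrow> J x \<le> j" for j x unfolding J_def by (rule Least_le)
  have JK: "J x < K (bf x)" for x
  proof (rule ccontr)
    assume "\<not> J x < K (bf x)"
    then have le: "K (bf x) \<le> J x" by simp
    define bb where "bb = bf x"
    define k where "k = K bb"
    define j where "j = J x"
    have "(f^^j) bb = (f^^(j-k)) ((f^^k) bb)" using le unfolding j_def k_def bb_def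
      by (metis funpow_add le_add_diff_inverse2 o_apply)
    moreover have "R ((f^^(j-k)) ((f^^k) bb)) ((f^^(j-k)) bb)" using KR Rfn unfolding k_def by blast
    ultimately have "R ((f^^(j-k)) bb) x" using JR[of x] Rtr Rsym unfolding j_def bb_def by metis
    then have "j \<le> j - k" using Jmin unfolding j_def bb_def by blast
    moreover have "k \<ge> 1" using K1 unfolding k_def by blast
    moreover have "k \<le> j" using le unfolding k_def j_def bb_def .
    ultimately show False by linarith
  qed
  define h where "h x = (f^^(J x)) (Q (bf x))" for x
  have hdist: "dist (h x) x \<le> \<epsilon>/2" for x
  proof -
    have "dist ((f^^(J x)) (bf x)) (h x) \<le> e4" unfolding h_def using QP(2) JK by blast
    moreover have "dist ((f^^(J x)) (bf x)) x \<le> e4" using Rdist(2)[OF JR] .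
    ultimately show ?thesis using dist_triangle3[of "h x" x "(f^^(J x)) (bf x)"] unfolding e4_def by linarith
  qed
  have hcls: "R x y \<Longrightarrow> h x = h y" for x y
  proof -
    assume r: "R x y"
    have "bf x = bf y" unfolding bf_def using S_cls[OF r] by simp
    moreover have "R z x \<longleftrightarrow> R z y" for z using r Rtr Rsym by metis
    ultimately have "J x = J y" unfolding J_def by simp
    then show "h x = h y" unfolding h_def using \<open>bf x = bf y\<close> by simp
  qed
  have hf: "h (f x) = f (h x)" for x
  proof -
    define bb where "bb = bf x"
    define j where "j = J x"
    have bfx: "bf (f x) = bb" unfolding bb_def bf_def using S_f by simp
    have R1: "R ((f^^Suc j) bb) (f x)" using Rfn[OF JR[of x], of 1] unfolding j_def bb_def by simp
    have j'le: "J (f x) \<le> Suc j" using Jmin R1 bfx by simp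
    have Rj': "R ((f^^(J (f x))) bb) (f x)" using JR[of "f x"] bfx by simp
    show ?thesis
    proof (cases "J (f x)")
      case (Suc t)
      have "R (f ((f^^t) bb)) (f x)" using Rj' Suc by simp
      then have "R ((f^^t) bb) x" by (rule Rback)
      then have "j \<le> t" using Jmin unfolding j_def bb_def by blast
      then have "J (f x) = Suc j" using j'le Suc by simp
      then show ?thesis unfolding h_def using bfx bb_def j_def by simp
    next
      case 0
      then have "R bb (f x)" using Rj' by simp
      then have "R ((f^^Suc j) bb) bb" using R1 Rtr Rsym by metis
      then have "K bb \<le> Suc j" using Kmin[of "Suc j" bb] by simp
      moreover have "j < K bb" using JK unfolding j_def bb_def by blast
      ultimately have Kj: "K bb = Suc j" by simp
      have "f (h x) = (f^^(Suc j)) (Q bb)" unfolding h_def j_def bb_def by simp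
      also have "\<dots> = Q bb" using QP(1)[of bb] Kj by simp
      finally show ?thesis unfolding h_def using 0 bfx by simp
    qed
  qed
  show "\<exists>\<delta>>0. \<forall>g. is_homeo g \<and> Dhom f g < \<delta> \<longrightarrow>
        (\<exists>h. continuous_on UNIV h \<and> dC0 h id < \<epsilon> \<and> h \<circ> g = f \<circ> h)"
  proof (intro exI conjI allI impI)
    show "\<tau> > 0" by (rule tau(1))
    fix g :: "'a \<Rightarrow> 'a" assume g: "is_homeo g \<and> Dhom f g < \<tau>"
    show "continuous_on UNIV h"
      unfolding continuous_on_iff
    proof (intro ballI allI impI)
      fix x and e :: real assume "e > 0"
      show "\<exists>d>0. \<forall>x'\<in>UNIV. dist x' x < d \<longrightarrow> dist (h x') (h x) < e"
      proof (intro exI conjI ballI impI)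
        show "\<tau> > 0" by (rule tau(1))
        fix x' assume "dist x' x < \<tau>"
        then have "R x' x" using Rclose by simp
        then show "dist (h x') (h x) < e" using hcls \<open>e > 0\<close> by simp
      qed
    qed
    have "(SUP x. dist (h x) (id x)) \<le> \<epsilon>/2"
      by (rule cSUP_least) (use hdist in auto)
    then show "dC0 h id < \<epsilon>" unfolding dC0_def using e0 by simp
    have bdd: "bdd_above (range (\<lambda>x. dist (f x) (g x)))"
      using distle by (intro bdd_aboveI) auto
    have "dist (f x) (g x) \<le> dC0 f g" for x
      unfolding dC0_def using cSUP_upper[OF UNIV_I bdd] by blast
    moreover have "dC0 f g \<le> Dhom f g" unfolding Dhom_def by simp
    ultimately have "dist (f x) (g x) < \<tau>" for x using g by (meson le_less_trans)
    then have "R (g x) (f x)" for x using Rclose by (simp add: dist_commute less_imp_le)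
    then have "h (g x) = f (h x)" for x using hcls hf by metis
    then show "h \<circ> g = f \<circ> h" by (auto simp: fun_eq_iff)
  qed
qed

end

theorem theorem1p2:
  fixes f :: "'a::metric_space \<Rightarrow> 'a"
  assumes "compact (UNIV :: 'a set)"
    and "is_homeo f"
    and "equicontinuous_homeo f"
    and "strict_periodic_shadowing f"
  shows "topologically_stable f \<and> covering_dim_zero TYPE('a)"
proof -
  interpret eqsys f using assms by unfold_locales
  show ?thesis using topstab dim0 by blast
qed

end
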